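(* Let $b_1,b_2,b_3\in\mathbb{R}$ with $b_1b_2b_3\neq 0$, let $C^b(x)=-\frac{b_3}{2b_1}x_1^2+x_3$ and $H^b(x)=\frac{b_1}{2}\big(x_2^2-\frac{b_2}{b_3}x_3^2\big)$, and for $\alpha,\beta,\gamma,\delta\in\mathbb{R}$ put $$C^b_{\alpha\beta}=\alpha C^b+\beta H^b=-\frac{\alpha b_3}{2b_1}x_1^2+\frac{\beta b_1}{2}x_2^2+\alpha x_3-\frac{\beta b_1b_2}{2b_3}x_3^2,\qquad H^b_{\gamma\delta}=\gamma C^b+\delta H^b,$$ and $$\{f,g\}^b_{\alpha\beta}=\det\begin{pmatrix}-\frac{\alpha b_3}{b_1}x_1 & \beta b_1x_2 & \alpha-\frac{\beta b_1b_2}{b_3}x_3\\[2pt] \frac{\partial f}{\partial x_1}&\frac{\partial f}{\partial x_2}&\frac{\partial f}{\partial x_3}\\[2pt] \frac{\partial g}{\partial x_1}&\frac{\partial g}{\partial x_2}&\frac{\partial g}{\partial x_3}\end{pmatrix},\qquad f,g\in C^\infty(\mathbb{R}^3,\mathbb{R}).$$ Then for every matrix $\begin{pmatrix}\alpha&\beta\\ \gamma&\delta\end{pmatrix}\in SL(2;\mathbb{R})$: (i) $(\mathbb{R}^3,\{\cdot,\cdot\}^b_{\alpha\beta},H^b_{\gamma\delta})$ is a Hamilton-Poisson realization of the system $$\dot x_1=b_1x_2,\qquad \dot x_2=b_2x_1x_3,\qquad \dot x_3=b_3x_1x_2,$$ i.e. $\{\cdot,\cdot\}^b_{\alpha\beta}$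 is a Poisson bracket and $\dot x_i=\{x_i,H^b_{\gamma\delta}\}^b_{\alpha\beta}$ for $i=1,2,3$; thus the system admits a family of Hamilton-Poisson realizations parametrized by $SL(2;\mathbb{R})$; (ii) $C^b_{\alpha\beta}$ is a Casimir of $(\mathbb{R}^3,\{\cdot,\cdot\}^b_{\alpha\beta})$, i.e. $\{C^b_{\alpha\beta},f\}^b_{\alpha\beta}=0$ for all $f\in C^\infty(\mathbb{R}^3,\mathbb{R})$. *)

theory Defs
  imports "HOL-Analysis.Analysis"
begin

type_synonym fn3 = "real^3 \<Rightarrow> real"

definition pderiv3 :: "3 \<Rightarrow> fn3 \<Rightarrow> fn3" where
  "pderiv3 i f = (\<lambda>x. frechet_derivative f (at x) (axis i 1))"

fun Ck3 :: "nat \<Rightarrow> fn3 \<Rightarrow> bool" where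
  "Ck3 0 f = continuous_on UNIV f"
| "Ck3 (Suc k) f = (f differentiable_on UNIV \<and> continuous_on UNIV f \<and>
                    (\<forall>i. Ck3 k (pderiv3 i f)))"

definition smooth3 :: "fn3 \<Rightarrow> bool" where
  "smooth3 f \<longleftrightarrow> (\<forall>k. Ck3 k f)"

definition poisson_bracket3 :: "(fn3 \<Rightarrow> fn3 \<Rightarrow> fn3) \<Rightarrow> bool" where
  "poisson_bracket3 B \<longleftrightarrow>
     (\<forall>f g. smooth3 f \<longrightarrow> smooth3 g \<longrightarrow> smooth3 (B f g)) \<and>
     (\<forall>f g h a c. smooth3 f \<longrightarrow> smooth3 g \<longrightarrow> smooth3 h \<longrightarrow>
        B (\<lambda>x. a * f x + c * g x) h = (\<lambda>x. a * B f h x + c * B g h x) \<and>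
        B h (\<lambda>x. a * f x + c * g x) = (\<lambda>x. a * B h f x + c * B h g x)) \<and>
     (\<forall>f g. smooth3 f \<longrightarrow> smooth3 g \<longrightarrow> B f g = (\<lambda>x. - B g f x)) \<and>
     (\<forall>f g h. smooth3 f \<longrightarrow> smooth3 g \<longrightarrow> smooth3 h \<longrightarrow>
        B f (\<lambda>x. g x * h x) = (\<lambda>x. B f g x * h x + g x * B f h x)) \<and>
     (\<forall>f g h. smooth3 f \<longrightarrow> smooth3 g \<longrightarrow> smooth3 h \<longrightarrow>
        (\<lambda>x. B f (B g h) x + B g (B h f) x + B h (B f g) x) = (\<lambda>x. 0))"

definition hamilton_poisson_realization3 ::
  "(fn3 \<Rightarrow> fn3 \<Rightarrow> fn3) \<Rightarrow> fn3 \<Rightarrow> (real^3 \<Rightarrow> real^3) \<Rightarrow> bool" where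
  "hamilton_poisson_realization3 B H X \<longleftrightarrow>
     poisson_bracket3 B \<and> smooth3 H \<and>
     (\<forall>i x. X x $ i = B (\<lambda>y. y $ i) H x)"

definition casimir3 :: "(fn3 \<Rightarrow> fn3 \<Rightarrow> fn3) \<Rightarrow> fn3 \<Rightarrow> bool" where
  "casimir3 B C \<longleftrightarrow> smooth3 C \<and> (\<forall>f. smooth3 f \<longrightarrow> B C f = (\<lambda>x. 0))"

definition Cb :: "real \<Rightarrow> real \<Rightarrow> real \<Rightarrow> fn3" where
  "Cb b1 b2 b3 = (\<lambda>x. - (b3 / (2 * b1)) * (x$1)^2 + x$3)"

definition Hb :: "real \<Rightarrow> real \<Rightarrow> real \<Rightarrow> fn3" where
  "Hb b1 b2 b3 = (\<lambda>x. (b1 / 2) * ((x$2)^2 - (b2 / b3) * (x$3)^2))"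

definition bracket_b :: "real \<Rightarrow> real \<Rightarrow> real \<Rightarrow> real \<Rightarrow> real \<Rightarrow> fn3 \<Rightarrow> fn3 \<Rightarrow> fn3" where
  "bracket_b b1 b2 b3 \<alpha> \<beta> f g = (\<lambda>x. det (vector [
      vector [- (\<alpha> * b3 / b1) * x$1, \<beta> * b1 * x$2, \<alpha> - (\<beta> * b1 * b2 / b3) * x$3],
      vector [pderiv3 1 f x, pderiv3 2 f x, pderiv3 3 f x],
      vector [pderiv3 1 g x, pderiv3 2 g x, pderiv3 3 g x]] :: real^3^3))"

definition system_b :: "real \<Rightarrow> real \<Rightarrow> real \<Rightarrow> real^3 \<Rightarrow> real^3" where
  "system_b b1 b2 b3 x = vector [b1 * x$2, b2 * x$1 * x$3, b3 * x$1 * x$2]"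

end

theory Submission
  imports Defs
begin



lemma pd_has: "f differentiable (at x) \<Longrightarrow> pderiv3 i f x = frechet_derivative f (at x) (axis i 1)"
  by (simp add: pderiv3_def)

lemma pd_eq: "(f has_derivative f') (at x) \<Longrightarrow> pderiv3 i f x = f' (axis i 1)"
  unfolding pderiv3_def using frechet_derivative_at by metis

lemma fd_works: "f differentiable (at x) \<Longrightarrow> (f has_derivative (\<lambda>h. frechet_derivative f (at x) h)) (at x)"
  using frechet_derivative_works by auto

lemma pd_add: "f differentiable (at x) \<Longrightarrow> g differentiable (at x) \<Longrightarrow>
  pderiv3 i (\<lambda>y. f y + g y) x = pderiv3 i f x + pderiv3 i g x"
  apply (rule trans[OF pd_eq[OF has_derivative_add[OF fd_works fd_works]]])
  by (auto simp: pderiv3_def)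

lemma pd_diff: "f differentiable (at x) \<Longrightarrow> g differentiable (at x) \<Longrightarrow>
  pderiv3 i (\<lambda>y. f y - g y) x = pderiv3 i f x - pderiv3 i g x"
  apply (rule trans[OF pd_eq[OF has_derivative_diff[OF fd_works fd_works]]])
  by (auto simp: pderiv3_def)

lemma pd_mult: "f differentiable (at x) \<Longrightarrow> g differentiable (at x) \<Longrightarrow>
  pderiv3 i (\<lambda>y. f y * g y) x = pderiv3 i f x * g x + f x * pderiv3 i g x"
  apply (rule trans[OF pd_eq[OF has_derivative_mult[OF fd_works fd_works]]])
  by (auto simp: pderiv3_def)

lemma pd_const: "pderiv3 i (\<lambda>y. c) x = 0"
  by (rule trans[OF pd_eq[OF has_derivative_const]]) simp

lemma pd_minus: "f differentiable (at x) \<Longrightarrow> pderiv3 i (\<lambda>y. - f y) x = - pderiv3 i f x"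
  apply (rule trans[OF pd_eq[OF has_derivative_minus[OF fd_works]]])
  by (auto simp: pderiv3_def)

lemma coord_has: "((\<lambda>y::real^3. y $ k) has_derivative (\<lambda>y. y $ k)) (at x)"
  by (simp add: bounded_linear_imp_has_derivative bounded_linear_vec_nth)

lemma pd_coord: "pderiv3 i (\<lambda>y. y $ k) x = (if i = k then 1 else 0)"
  by (rule trans[OF pd_eq[OF coord_has]]) (simp add: axis_def)

lemma coord_diff[simp]: "(\<lambda>y::real^3. y $ k) differentiable (at x)"
  using coord_has differentiable_def by blast



lemma Ck3_diff_at: "Ck3 (Suc k) f \<Longrightarrow> f differentiable (at x)"
  by (auto simp: differentiable_on_def)

lemma Ck3_mono: "Ck3 (Suc k) f \<Longrightarrow> Ck3 k f"
proof (induction k arbitrary: f)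
  case 0 then show ?case by simp
next
  case (Suc k) then show ?case by auto
qed

lemma Ck3_const: "Ck3 k (\<lambda>x. c)"
proof (induction k arbitrary: c)
  case 0 then show ?case by simp
next
  case (Suc k)
  have "pderiv3 i (\<lambda>x. c) = (\<lambda>x. 0)" for i by (rule ext) (rule pd_const)
  with Suc show ?case by simp
qed

lemma Ck3_coord: "Ck3 k (\<lambda>x. x $ j)"
proof (cases k)
  case 0 then show ?thesis by (simp add: continuous_on_component)
next
  case (Suc m)
  have "pderiv3 i (\<lambda>x. x $ j) = (\<lambda>x. if i = j then 1 else 0)" for i by (rule ext) (rule pd_coord)
  then show ?thesis using Suc by (simp add: Ck3_const continuous_on_component differentiable_on_def)
qed

lemma Ck3_add: "Ck3 k f \<Longrightarrow> Ck3 k g \<Longrightarrow> Ck3 k (\<lambda>x. f x + g x)"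
proof (induction k arbitrary: f g)
  case 0 then show ?case by (simp add: continuous_on_add)
next
  case (Suc k)
  have "pderiv3 i (\<lambda>x. f x + g x) = (\<lambda>x. pderiv3 i f x + pderiv3 i g x)" for i
    by (rule ext) (rule pd_add[OF Ck3_diff_at[OF Suc.prems(1)] Ck3_diff_at[OF Suc.prems(2)]])
  with Suc show ?case by (auto simp: continuous_on_add differentiable_on_def)
qed

lemma Ck3_mult: "Ck3 k f \<Longrightarrow> Ck3 k g \<Longrightarrow> Ck3 k (\<lambda>x. f x * g x)"
proof (induction k arbitrary: f g)
  case 0 then show ?case by (simp add: continuous_on_mult)
next
  case (Suc k)
  have "pderiv3 i (\<lambda>x. f x * g x) = (\<lambda>x. pderiv3 i f x * g x + f x * pderiv3 i g x)" for i
    by (rule ext) (rule pd_mult[OF Ck3_diff_at[OF Suc.prems(1)] Ck3_diff_at[OF Suc.prems(2)]])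
  moreover have "Ck3 k (\<lambda>x. pderiv3 i f x * g x + f x * pderiv3 i g x)" for i
    using Suc Ck3_mono[OF Suc.prems(1)] Ck3_mono[OF Suc.prems(2)] by (intro Ck3_add) auto
  ultimately show ?case using Suc.prems by (auto simp: continuous_on_mult differentiable_on_def)
qed

lemma smooth_const[intro]: "smooth3 (\<lambda>x. c)" by (simp add: smooth3_def Ck3_const)
lemma smooth_coord[intro]: "smooth3 (\<lambda>x. x $ j)" by (simp add: smooth3_def Ck3_coord)
lemma smooth_add[intro]: "smooth3 f \<Longrightarrow> smooth3 g \<Longrightarrow> smooth3 (\<lambda>x. f x + g x)"
  by (simp add: smooth3_def Ck3_add)
lemma smooth_mult[intro]: "smooth3 f \<Longrightarrow> smooth3 g \<Longrightarrow> smooth3 (\<lambda>x. f x * g x)"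
  by (simp add: smooth3_def Ck3_mult)
lemma smooth_minus[intro]: "smooth3 f \<Longrightarrow> smooth3 (\<lambda>x. - f x)"
  using smooth_mult[OF smooth_const[of "-1"], of f] by simp
lemma smooth_diff[intro]: "smooth3 f \<Longrightarrow> smooth3 g \<Longrightarrow> smooth3 (\<lambda>x. f x - g x)"
  using smooth_add[OF _ smooth_minus, of f g] by simp
lemma smooth_pd[intro]: "smooth3 f \<Longrightarrow> smooth3 (pderiv3 i f)"
  unfolding smooth3_def by (metis Ck3.simps(2))
lemma smooth_diffat[simp]: "smooth3 f \<Longrightarrow> f differentiable (at x)"
  unfolding smooth3_def using Ck3_diff_at by blast
lemma smooth_cont: "smooth3 f \<Longrightarrow> continuous_on UNIV f"
  unfolding smooth3_def by (metis Ck3.simps(1))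


lemma line_deriv:
  assumes "g differentiable (at (q + s *\<^sub>R w))"
  shows "((\<lambda>s. g (q + s *\<^sub>R w)) has_real_derivative frechet_derivative g (at (q + s *\<^sub>R w)) w) (at s)"
proof -
  have l: "((\<lambda>s. q + s *\<^sub>R w) has_derivative (\<lambda>h. h *\<^sub>R w)) (at s)"
    by (auto intro!: derivative_eq_intros)
  have g: "(g has_derivative frechet_derivative g (at (q + s *\<^sub>R w))) (at (q + s *\<^sub>R w))"
    using assms frechet_derivative_works by blast
  have c: "((\<lambda>s. g (q + s *\<^sub>R w)) has_derivative (\<lambda>h. frechet_derivative g (at (q + s *\<^sub>R w)) (h *\<^sub>R w))) (at s)"
    using has_derivative_compose[OF l g] by simp
  have lin: "linear (frechet_derivative g (at (q + s *\<^sub>R w)))"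
    using g has_derivative_linear by blast
  have "(\<lambda>h. frechet_derivative g (at (q + s *\<^sub>R w)) (h *\<^sub>R w)) = (*) (frechet_derivative g (at (q + s *\<^sub>R w)) w)"
    by (rule ext) (simp add: linear_cmul[OF lin])
  with c show ?thesis by (simp add: has_field_derivative_def)
qed

lemma line_pd:
  assumes "smooth3 g"
  shows "((\<lambda>s. g (q + s *\<^sub>R axis i 1)) has_real_derivative pderiv3 i g (q + s *\<^sub>R axis i 1)) (at s)"
  using line_deriv[of g q s "axis i 1"] assms by (simp add: pd_has)

lemma schwarz:
  assumes f: "smooth3 f"
  shows "pderiv3 j (pderiv3 i f) p = pderiv3 i (pderiv3 j f) p"
proof (rule ccontr)
  define u where "u = (axis i 1 :: real^3)"
  define v where "v = (axis j 1 :: real^3)"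
  define A where "A = pderiv3 j (pderiv3 i f)"
  define B where "B = pderiv3 i (pderiv3 j f)"
  assume ne: "pderiv3 j (pderiv3 i f) p \<noteq> pderiv3 i (pderiv3 j f) p"
  define e where "e = \<bar>A p - B p\<bar> / 2"
  have e: "e > 0" using ne by (simp add: e_def A_def B_def)
  have sA: "smooth3 A" and sB: "smooth3 B" using f by (auto simp: A_def B_def)
  have cA: "isCont A p" using smooth_cont[OF sA] continuous_on_eq_continuous_at by blast
  have cB: "isCont B p" using smooth_cont[OF sB] continuous_on_eq_continuous_at by blast
  obtain d1 where d1: "d1 > 0" "\<And>y. dist y p < d1 \<Longrightarrow> dist (A y) (A p) < e"
    using cA e unfolding continuous_at_eps_delta by blast
  obtain d2 where d2: "d2 > 0" "\<And>y. dist y p < d2 \<Longrightarrow> dist (B y) (B p) < e"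
    using cB e unfolding continuous_at_eps_delta by blast
  define h where "h = min d1 d2 / 3"
  have h: "h > 0" using d1 d2 by (simp add: h_def)
  have nu: "norm u = 1" "norm v = 1" by (auto simp: u_def v_def)
  have close: "dist (p + a *\<^sub>R u + b *\<^sub>R v) p < 3 * h" if "0 < a" "a < h" "0 < b" "b < h" for a b
  proof -
    have "dist (p + a *\<^sub>R u + b *\<^sub>R v) p = norm (a *\<^sub>R u + b *\<^sub>R v)" by (simp add: dist_norm)
    also have "\<dots> \<le> norm (a *\<^sub>R u) + norm (b *\<^sub>R v)" by (rule norm_triangle_ineq)
    also have "\<dots> = \<bar>a\<bar> + \<bar>b\<bar>" using nu by simp
    also have "\<dots> < 3 * h" using that by simp
    finally show ?thesis .
  qed
  define \<Delta> where "\<Delta> = f (p + h *\<^sub>R u + h *\<^sub>R v) - f (p + h *\<^sub>R u) - f (p + h *\<^sub>R v) + f p"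
  have "\<exists>a b. 0 < a \<and> a < h \<and> 0 < b \<and> b < h \<and> \<Delta> = h * h * A (p + a *\<^sub>R u + b *\<^sub>R v)"
  proof -
    define \<phi> where "\<phi> s = f ((p + h *\<^sub>R v) + s *\<^sub>R u) - f (p + s *\<^sub>R u)" for s
    have "\<And>s. (\<phi> has_real_derivative (pderiv3 i f ((p + h *\<^sub>R v) + s *\<^sub>R u) - pderiv3 i f (p + s *\<^sub>R u))) (at s)"
      unfolding \<phi>_def u_def by (intro DERIV_diff line_pd f)
    from MVT2[OF h this] obtain a where a: "0 < a" "a < h"
      "\<phi> h - \<phi> 0 = (h - 0) * (pderiv3 i f ((p + h *\<^sub>R v) + a *\<^sub>R u) - pderiv3 i f (p + a *\<^sub>R u))" by blast
    define \<psi> where "\<psi> t = pderiv3 i f ((p + a *\<^sub>R u) + t *\<^sub>R v)" for t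
    have "\<And>t. (\<psi> has_real_derivative A ((p + a *\<^sub>R u) + t *\<^sub>R v)) (at t)"
      unfolding \<psi>_def v_def A_def by (intro line_pd smooth_pd f)
    from MVT2[OF h this] obtain b where b: "0 < b" "b < h"
      "\<psi> h - \<psi> 0 = (h - 0) * A ((p + a *\<^sub>R u) + b *\<^sub>R v)" by blast
    have "\<Delta> = \<phi> h - \<phi> 0" by (simp add: \<Delta>_def \<phi>_def algebra_simps)
    also have "\<dots> = h * (\<psi> h - \<psi> 0)" using a(3) by (simp add: \<psi>_def algebra_simps)
    also have "\<dots> = h * h * A (p + a *\<^sub>R u + b *\<^sub>R v)" using b(3) by simp
    finally show ?thesis using a b by blast
  qed
  then obtain a b where ab: "0 < a" "a < h" "0 < b" "b < h" "\<Delta> = h * h * A (p + a *\<^sub>R u + b *\<^sub>R v)" by blast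
  have "\<exists>a b. 0 < a \<and> a < h \<and> 0 < b \<and> b < h \<and> \<Delta> = h * h * B (p + a *\<^sub>R u + b *\<^sub>R v)"
  proof -
    define \<phi> where "\<phi> s = f ((p + h *\<^sub>R u) + s *\<^sub>R v) - f (p + s *\<^sub>R v)" for s
    have "\<And>s. (\<phi> has_real_derivative (pderiv3 j f ((p + h *\<^sub>R u) + s *\<^sub>R v) - pderiv3 j f (p + s *\<^sub>R v))) (at s)"
      unfolding \<phi>_def v_def by (intro DERIV_diff line_pd f)
    from MVT2[OF h this] obtain b where b: "0 < b" "b < h"
      "\<phi> h - \<phi> 0 = (h - 0) * (pderiv3 j f ((p + h *\<^sub>R u) + b *\<^sub>R v) - pderiv3 j f (p + b *\<^sub>R v))" by blast
    define \<psi> where "\<psi> t = pderiv3 j f ((p + b *\<^sub>R v) + t *\<^sub>R u)" for t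
    have "\<And>t. (\<psi> has_real_derivative B ((p + b *\<^sub>R v) + t *\<^sub>R u)) (at t)"
      unfolding \<psi>_def u_def B_def by (intro line_pd smooth_pd f)
    from MVT2[OF h this] obtain a where a: "0 < a" "a < h"
      "\<psi> h - \<psi> 0 = (h - 0) * B ((p + b *\<^sub>R v) + a *\<^sub>R u)" by blast
    have "\<Delta> = \<phi> h - \<phi> 0" by (simp add: \<Delta>_def \<phi>_def algebra_simps)
    also have "\<dots> = h * (\<psi> h - \<psi> 0)" using b(3) by (simp add: \<psi>_def algebra_simps)
    also have "\<dots> = h * h * B (p + a *\<^sub>R u + b *\<^sub>R v)" using a(3) by (simp add: algebra_simps)
    finally show ?thesis using a b by blast
  qed
  then obtain a' b' where ab': "0 < a'" "a' < h" "0 < b'" "b' < h" "\<Delta> = h * h * B (p + a' *\<^sub>R u + b' *\<^sub>R v)" by blast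
  have eqAB: "A (p + a *\<^sub>R u + b *\<^sub>R v) = B (p + a' *\<^sub>R u + b' *\<^sub>R v)"
    using ab(5) ab'(5) h by simp
  have "3 * h \<le> d1" "3 * h \<le> d2" by (auto simp: h_def)
  then have "dist (A (p + a *\<^sub>R u + b *\<^sub>R v)) (A p) < e" "dist (B (p + a' *\<^sub>R u + b' *\<^sub>R v)) (B p) < e"
    using close[OF ab(1-4)] close[OF ab'(1-4)] d1 d2 by auto
  then have "\<bar>A p - B p\<bar> < 2 * e" using eqAB by (simp add: dist_real_def)
  then show False by (simp add: e_def)
qed


definition brk :: "real \<Rightarrow> real \<Rightarrow> real \<Rightarrow> real \<Rightarrow> fn3 \<Rightarrow> fn3 \<Rightarrow> fn3" where
  "brk k1 k2 k3 a0 f g = (\<lambda>x. (k1 * x$1) * (pderiv3 2 f x * pderiv3 3 g x - pderiv3 3 f x * pderiv3 2 g x)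
     + (k2 * x$2) * (pderiv3 3 f x * pderiv3 1 g x - pderiv3 1 f x * pderiv3 3 g x)
     + (a0 + k3 * x$3) * (pderiv3 1 f x * pderiv3 2 g x - pderiv3 2 f x * pderiv3 1 g x))"

lemma bracket_eq: "bracket_b b1 b2 b3 \<alpha> \<beta> = brk (- (\<alpha> * b3 / b1)) (\<beta> * b1) (- (\<beta> * b1 * b2 / b3)) \<alpha>"
  apply (rule ext)+
  unfolding bracket_b_def brk_def
  by (simp add: det_3 algebra_simps)

lemmas pdr = pd_add pd_diff pd_mult pd_const pd_coord pd_minus

lemma smooth_brk: "smooth3 f \<Longrightarrow> smooth3 g \<Longrightarrow> smooth3 (brk k1 k2 k3 a0 f g)"
  unfolding brk_def by (intro smooth_add smooth_mult smooth_diff smooth_pd smooth_const smooth_coord)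

lemma sw12: "smooth3 g \<Longrightarrow> pderiv3 1 (pderiv3 2 g) x = pderiv3 2 (pderiv3 1 g) x" by (rule schwarz)
lemma sw13: "smooth3 g \<Longrightarrow> pderiv3 1 (pderiv3 3 g) x = pderiv3 3 (pderiv3 1 g) x" by (rule schwarz)
lemma sw23: "smooth3 g \<Longrightarrow> pderiv3 2 (pderiv3 3 g) x = pderiv3 3 (pderiv3 2 g) x" by (rule schwarz)

lemma pd_brk: assumes "smooth3 g" "smooth3 h"
  shows "pderiv3 j (brk k1 k2 k3 a0 g h) x =
    (k1 * (if j = 1 then 1 else 0)) * (pderiv3 2 g x * pderiv3 3 h x - pderiv3 3 g x * pderiv3 2 h x)
  + (k1 * x$1) * (pderiv3 j (pderiv3 2 g) x * pderiv3 3 h x + pderiv3 2 g x * pderiv3 j (pderiv3 3 h) x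
                  - pderiv3 j (pderiv3 3 g) x * pderiv3 2 h x - pderiv3 3 g x * pderiv3 j (pderiv3 2 h) x)
  + (k2 * (if j = 2 then 1 else 0)) * (pderiv3 3 g x * pderiv3 1 h x - pderiv3 1 g x * pderiv3 3 h x)
  + (k2 * x$2) * (pderiv3 j (pderiv3 3 g) x * pderiv3 1 h x + pderiv3 3 g x * pderiv3 j (pderiv3 1 h) x
                  - pderiv3 j (pderiv3 1 g) x * pderiv3 3 h x - pderiv3 1 g x * pderiv3 j (pderiv3 3 h) x)
  + (k3 * (if j = 3 then 1 else 0)) * (pderiv3 1 g x * pderiv3 2 h x - pderiv3 2 g x * pderiv3 1 h x)
  + (a0 + k3 * x$3) * (pderiv3 j (pderiv3 1 g) x * pderiv3 2 h x + pderiv3 1 g x * pderiv3 j (pderiv3 2 h) x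
                  - pderiv3 j (pderiv3 2 g) x * pderiv3 1 h x - pderiv3 2 g x * pderiv3 j (pderiv3 1 h) x)"
  unfolding brk_def using assms by (simp add: pdr smooth_pd diff_diff_eq)

lemma brk_app: "brk k1 k2 k3 a0 f g x = (k1 * x$1) * (pderiv3 2 f x * pderiv3 3 g x - pderiv3 3 f x * pderiv3 2 g x)
     + (k2 * x$2) * (pderiv3 3 f x * pderiv3 1 g x - pderiv3 1 f x * pderiv3 3 g x)
     + (a0 + k3 * x$3) * (pderiv3 1 f x * pderiv3 2 g x - pderiv3 2 f x * pderiv3 1 g x)"
  by (simp add: brk_def)



lemma brk_poisson: "poisson_bracket3 (brk k1 k2 k3 a0)"
  unfolding poisson_bracket3_def
proof (intro conjI allI impI)
  fix f g assume "smooth3 f" "smooth3 g"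
  then show "smooth3 (brk k1 k2 k3 a0 f g)" by (rule smooth_brk)
next
  fix f g h a c assume s: "smooth3 f" "smooth3 g" "smooth3 h"
  show "brk k1 k2 k3 a0 (\<lambda>x. a * f x + c * g x) h = (\<lambda>x. a * brk k1 k2 k3 a0 f h x + c * brk k1 k2 k3 a0 g h x)"
    apply (rule ext) unfolding brk_def using s by (simp add: pdr algebra_simps)
  show "brk k1 k2 k3 a0 h (\<lambda>x. a * f x + c * g x) = (\<lambda>x. a * brk k1 k2 k3 a0 h f x + c * brk k1 k2 k3 a0 h g x)"
    apply (rule ext) unfolding brk_def using s by (simp add: pdr algebra_simps)
next
  fix f g assume s: "smooth3 f" "smooth3 g"
  show "brk k1 k2 k3 a0 f g = (\<lambda>x. - brk k1 k2 k3 a0 g f x)"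
    apply (rule ext) unfolding brk_def by (simp add: algebra_simps)
next
  fix f g h assume s: "smooth3 f" "smooth3 g" "smooth3 h"
  show "brk k1 k2 k3 a0 f (\<lambda>x. g x * h x) = (\<lambda>x. brk k1 k2 k3 a0 f g x * h x + g x * brk k1 k2 k3 a0 f h x)"
    apply (rule ext) unfolding brk_def using s by (simp add: pdr algebra_simps)
next
  fix f g h assume s: "smooth3 f" "smooth3 g" "smooth3 h"
  show "(\<lambda>x. brk k1 k2 k3 a0 f (brk k1 k2 k3 a0 g h) x + brk k1 k2 k3 a0 g (brk k1 k2 k3 a0 h f) x
           + brk k1 k2 k3 a0 h (brk k1 k2 k3 a0 f g) x) = (\<lambda>x. 0)"
  proof (rule ext)
    fix x
    show "brk k1 k2 k3 a0 f (brk k1 k2 k3 a0 g h) x + brk k1 k2 k3 a0 g (brk k1 k2 k3 a0 h f) x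
           + brk k1 k2 k3 a0 h (brk k1 k2 k3 a0 f g) x = 0"
      using s apply (simp only: brk_app pd_brk)
      by (simp add: sw12 sw13 sw23 algebra_simps)
  qed
qed


theorem proposition3p2:
  fixes b1 b2 b3 \<alpha> \<beta> \<gamma> \<delta> :: real
  assumes "b1 * b2 * b3 \<noteq> 0"
    and "\<alpha> * \<delta> - \<beta> * \<gamma> = 1"
  shows "hamilton_poisson_realization3 (bracket_b b1 b2 b3 \<alpha> \<beta>)
           (\<lambda>x. \<gamma> * Cb b1 b2 b3 x + \<delta> * Hb b1 b2 b3 x) (system_b b1 b2 b3)
       \<and> casimir3 (bracket_b b1 b2 b3 \<alpha> \<beta>)
           (\<lambda>x. \<alpha> * Cb b1 b2 b3 x + \<beta> * Hb b1 b2 b3 x)"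
proof -
  have nz: "b1 \<noteq> 0" "b2 \<noteq> 0" "b3 \<noteq> 0" using assms(1) by auto
  have sm: "smooth3 (\<lambda>x. a * Cb b1 b2 b3 x + c * Hb b1 b2 b3 x)" for a c
    unfolding Cb_def Hb_def power2_eq_square
    by (intro smooth_add smooth_mult smooth_diff smooth_minus smooth_const smooth_coord)
  have dC: "pderiv3 k (\<lambda>x. a * Cb b1 b2 b3 x + c * Hb b1 b2 b3 x) x =
     (if k = 1 then - (a * b3 / b1) * x$1 else if k = 2 then c * b1 * x$2
      else a - (c * b1 * b2 / b3) * x$3)" for a c k x
  proof -
    have gen: "pderiv3 k (\<lambda>x. a * (- q1 * (x$1 * x$1) + x$3) + c * (q2 * (x$2 * x$2 - q3 * (x$3 * x$3)))) x =
       a * (- q1 * ((if k = 1 then 1 else 0) * x$1 + x$1 * (if k = 1 then 1 else 0)) + (if k = 3 then 1 else 0))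
       + c * (q2 * (((if k = 2 then 1 else 0) * x$2 + x$2 * (if k = 2 then 1 else 0))
          - q3 * ((if k = 3 then 1 else 0) * x$3 + x$3 * (if k = 3 then 1 else 0))))" for q1 q2 q3
      by (simp add: pdr)
    have "pderiv3 k (\<lambda>x. a * Cb b1 b2 b3 x + c * Hb b1 b2 b3 x) x =
       a * (- (b3 / (2 * b1)) * ((if k = 1 then 1 else 0) * x$1 + x$1 * (if k = 1 then 1 else 0)) + (if k = 3 then 1 else 0))
       + c * ((b1 / 2) * (((if k = 2 then 1 else 0) * x$2 + x$2 * (if k = 2 then 1 else 0))
          - (b2 / b3) * ((if k = 3 then 1 else 0) * x$3 + x$3 * (if k = 3 then 1 else 0))))"
      unfolding Cb_def Hb_def power2_eq_square by (rule gen)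
    also have "\<dots> = (if k = 1 then - (a * b3 / b1) * x$1 else if k = 2 then c * b1 * x$2
      else a - (c * b1 * b2 / b3) * x$3)"
      using nz exhaust_3[of k] by (auto simp: field_simps)
    finally show ?thesis .
  qed
  have ham: "system_b b1 b2 b3 x $ i =
     bracket_b b1 b2 b3 \<alpha> \<beta> (\<lambda>y. y $ i) (\<lambda>x. \<gamma> * Cb b1 b2 b3 x + \<delta> * Hb b1 b2 b3 x) x" for i x
  proof -
    have e: "\<And>X. \<alpha> * (\<delta> * X) = X + \<beta> * (\<gamma> * X)"
      using assms(2) by (metis add.commute diff_eq_eq mult.assoc mult_1 distrib_right)
    show ?thesis
      unfolding bracket_eq brk_app dC pd_coord system_b_def
      using nz exhaust_3[of i] by (auto simp: field_simps e)
  qed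
  have cas: "bracket_b b1 b2 b3 \<alpha> \<beta> (\<lambda>x. \<alpha> * Cb b1 b2 b3 x + \<beta> * Hb b1 b2 b3 x) f = (\<lambda>x. 0)" for f
    apply (rule ext)
    unfolding bracket_eq brk_app dC using nz by (simp add: field_simps)
  show ?thesis
    unfolding hamilton_poisson_realization3_def casimir3_def bracket_eq[symmetric]
    using brk_poisson[of "- (\<alpha> * b3 / b1)" "\<beta> * b1" "- (\<beta> * b1 * b2 / b3)" \<alpha>]
    by (auto simp: bracket_eq[symmetric] sm ham cas)
qed
end
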